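(* Assume the setting described in the context, assume $L>1$, let $\xi=(\xi_1,\dots,\xi_{\ell_L})\in\mathbb R^{\ell_L}$, for $i,j\in\mathbb N_0$, $k\in\mathbb N$ let $\alpha_{i,j,k}=i\ell_{k-1}+j+\sum_{h=1}^{k-1}\ell_h(\ell_{h-1}+1)$, and let $\theta=(\theta_1,\dots,\theta_{\mathfrak d})$, $\vartheta=(\vartheta_1,\dots,\vartheta_{\mathfrak d})\in\mathbb R^{\mathfrak d}$ satisfy for all $i\in\{1,\dots,\ell_L\}$ and all $j\in\{1,\dots,\mathfrak d\}\setminus\big(\bigcup_{k=1}^{\ell_L}\{\alpha_{\ell_{L-1},1,L-1},\alpha_{0,1,L},\alpha_{\ell_L,k,L}\}\big)$ that $\theta_{\alpha_{\ell_{L-1},1,L-1}}=\vartheta_{\alpha_{0,1,L}}=1$, $\theta_{\alpha_{\ell_L,i,L}}=\vartheta_{\alpha_{\ell_L,i,L}}=\xi_i$, and $\theta_{\alpha_{0,1,L}}=\vartheta_{\alpha_{\ell_{L-1},1,L-1}}=\theta_j=\vartheta_j=0$. Then $\mathcal L_\infty(\theta)=\mathcal L_\infty(\vartheta)$ and $$\mathcal L_\infty\Big(\frac{\theta+\vartheta}2\Big)=\Big[\frac{\mathcal L_\infty(\theta)+\mathcal L_\infty(\vartheta)}2\Big]+\frac{\mathfrak m}{16}+\frac12\Big[\xi_1\mathfrak m-\int_{[a,b]^{\ell_0}}f_1(x)\,\mu(dx)\Big].$$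
   Context: Setting. Let $L,\mathfrak d\in\mathbb N=\{1,2,\dots\}$, $(\ell_k)_{k\in\mathbb N_0}\subseteq\mathbb N$, $a\in\mathbb R$, $b\in(a,\infty)$ with $\mathfrak d=\sum_{k=1}^L\ell_k(\ell_{k-1}+1)$; let $\mathbf d_k=\sum_{h=1}^k\ell_h(\ell_{h-1}+1)$ for $k\in\mathbb N_0$. For $\theta=(\theta_1,\dots,\theta_{\mathfrak d})\in\mathbb R^{\mathfrak d}$, $k\in\{1,\dots,L\}$, $i\in\{1,\dots,\ell_k\}$, $j\in\{1,\dots,\ell_{k-1}\}$ let $\mathfrak w^{k,\theta}_{i,j}=\theta_{(i-1)\ell_{k-1}+j+\mathbf d_{k-1}}$ and $\mathfrak b^{k,\theta}_i=\theta_{\ell_k\ell_{k-1}+i+\mathbf d_{k-1}}$, let $\mathfrak w^{k,\theta}=(\mathfrak w^{k,\theta}_{i,j})_{i,j}\in\mathbb R^{\ell_k\times\ell_{k-1}}$, $\mathfrak b^{k,\theta}=(\mathfrak b^{k,\theta}_1,\dots,\mathfrak b^{k,\theta}_{\ell_k})\in\mathbb R^{\ell_k}$, and $\mathcal A^\theta_k(x)=\mathfrak b^{k,\theta}+\mathfrak w^{k,\theta}x$. Let $\mathfrak M_\infty(x_1,\dots,x_n)=(\max\{x_1,0\},\dots,\max\{x_n,0\})$ and $\|\cdot\|$ the Euclidean norm. Define $\mathcal N^{k,\theta}_\infty\colon\mathbb R^{\ell_0}\to\mathbb R^{\ell_k}$, $k\in\{1,\dots,L\}$, by $\mathcal N^{1,\theta}_\infty=\mathcal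 A^\theta_1$ and $\mathcal N^{k+1,\theta}_\infty(x)=\mathcal A^\theta_{k+1}(\mathfrak M_\infty(\mathcal N^{k,\theta}_\infty(x)))$. Let $\mu$ be a measure on the Borel $\sigma$-algebra of $[a,b]^{\ell_0}$ with $\mathfrak m=\mu([a,b]^{\ell_0})\in\mathbb R$, let $f=(f_1,\dots,f_{\ell_L})\colon[a,b]^{\ell_0}\to\mathbb R^{\ell_L}$ be measurable, and let $\mathcal L_\infty\colon\mathbb R^{\mathfrak d}\to\mathbb R$, $\mathcal L_\infty(\theta)=\int_{[a,b]^{\ell_0}}\|\mathcal N^{L,\theta}_\infty(x)-f(x)\|^2\,\mu(dx)$ (these integrals are real numbers as part of the setting). *)

theory Defs
  imports "HOL-Analysis.Analysis"
begin

text \<open>Vectors in R^n are represented as functions nat => real, using the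
coordinates 1..n. Parameter vectors theta in R^d likewise use coordinates 1..d.\<close>

definition dsum :: "(nat \<Rightarrow> nat) \<Rightarrow> nat \<Rightarrow> nat" where
  "dsum l k = (\<Sum>h=1..k. l h * (l (h - 1) + 1))"

definition wgt :: "(nat \<Rightarrow> nat) \<Rightarrow> nat \<Rightarrow> (nat \<Rightarrow> real) \<Rightarrow> nat \<Rightarrow> nat \<Rightarrow> real" where
  "wgt l k \<theta> i j = \<theta> ((i - 1) * l (k - 1) + j + dsum l (k - 1))"

definition bias :: "(nat \<Rightarrow> nat) \<Rightarrow> nat \<Rightarrow> (nat \<Rightarrow> real) \<Rightarrow> nat \<Rightarrow> real" where
  "bias l k \<theta> i = \<theta> (l k * l (k - 1) + i + dsum l (k - 1))"

definition affine :: "(nat \<Rightarrow> nat) \<Rightarrow> nat \<Rightarrow> (nat \<Rightarrow> real) \<Rightarrow> (nat \<Rightarrow> real) \<Rightarrow> (nat \<Rightarrow> real)" where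
  "affine l k \<theta> x = (\<lambda>i. bias l k \<theta> i + (\<Sum>j=1..l (k - 1). wgt l k \<theta> i j * x j))"

definition relu :: "(nat \<Rightarrow> real) \<Rightarrow> (nat \<Rightarrow> real)" where
  "relu x = (\<lambda>i. max (x i) 0)"

text \<open>Realization N^{k,theta}; the case k = 0 is an unused convention.\<close>
fun realization :: "(nat \<Rightarrow> nat) \<Rightarrow> nat \<Rightarrow> (nat \<Rightarrow> real) \<Rightarrow> (nat \<Rightarrow> real) \<Rightarrow> (nat \<Rightarrow> real)" where
  "realization l 0 \<theta> x = x"
| "realization l (Suc 0) \<theta> x = affine l 1 \<theta> x"
| "realization l (Suc (Suc k)) \<theta> x = affine l (Suc (Suc k)) \<theta> (relu (realization l (Suc k) \<theta> x))"

definition sqerr :: "(nat \<Rightarrow> nat) \<Rightarrow> nat \<Rightarrow> ((nat \<Rightarrow> real) \<Rightarrow> nat \<Rightarrow> real) \<Rightarrow> (nat \<Rightarrow> real) \<Rightarrow> (nat \<Rightarrow> real) \<Rightarrow> real" where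
  "sqerr l L f \<theta> x = (\<Sum>i=1..l L. (realization l L \<theta> x i - f x i)\<^sup>2)"

definition loss :: "(nat \<Rightarrow> nat) \<Rightarrow> nat \<Rightarrow> (nat \<Rightarrow> real) measure \<Rightarrow> ((nat \<Rightarrow> real) \<Rightarrow> nat \<Rightarrow> real) \<Rightarrow> (nat \<Rightarrow> real) \<Rightarrow> real" where
  "loss l L \<mu> f \<theta> = (\<integral>x. sqerr l L f \<theta> x \<partial>\<mu>)"

definition alpha :: "(nat \<Rightarrow> nat) \<Rightarrow> nat \<Rightarrow> nat \<Rightarrow> nat \<Rightarrow> nat" where
  "alpha l i j k = i * l (k - 1) + j + (\<Sum>h=1..k - 1. l h * (l (h - 1) + 1))"

end

theory Submission
  imports Defs
begin

lemma real_layer_bias: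
  assumes "k \<ge> 1" "\<forall>j\<in>{1..l (k-1)}. wgt l k \<eta> i j = 0"
  shows "realization l k \<eta> x i = bias l k \<eta> i"
proof (cases k)
  case 0 then show ?thesis using assms by simp
next
  case (Suc m)
  then show ?thesis
  proof (cases m)
    case 0 then show ?thesis using assms Suc by (simp add: affine_def)
  next
    case (Suc n) then show ?thesis using assms \<open>k = Suc m\<close> by (simp add: affine_def)
  qed
qed

lemma dsum_Suc: "dsum l (Suc k) = dsum l k + l (Suc k) * (l k + 1)"
  by (simp add: dsum_def)

lemma general:
  fixes \<eta> :: "nat \<Rightarrow> real"
  assumes l_pos: "\<forall>k. l k \<ge> 1"
    and LK: "L = Suc (Suc K)"
    and d_def: "d = (\<Sum>k=1..L. l k * (l (k - 1) + 1))"
    and e1: "\<eta> (alpha l (l (L - 1)) 1 (L - 1)) = c"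
    and e2: "\<eta> (alpha l 0 1 L) = w"
    and e3: "\<forall>i\<in>{1..l L}. \<eta> (alpha l (l L) i L) = \<xi> i"
    and e6: "\<forall>j\<in>{1..d} - (\<Union>k\<in>{1..l L}. {alpha l (l (L - 1)) 1 (L - 1), alpha l 0 1 L, alpha l (l L) k L}). \<eta> j = 0"
    and i: "i \<in> {1..l L}"
  shows "realization l L \<eta> x i = \<xi> i + (if i = 1 then w * max c 0 else 0)"
proof -
  define a0 where "a0 = l K"
  define a1 where "a1 = l (Suc K)"
  define a2 where "a2 = l L"
  define P where "P = dsum l K"
  define D where "D = dsum l (Suc K)"
  have a0: "a0 \<ge> 1" and a1: "a1 \<ge> 1" and a2: "a2 \<ge> 1" using l_pos by (auto simp: a0_def a1_def a2_def)
  have DP: "D = P + a1 * (a0 + 1)" by (simp add: D_def P_def dsum_Suc a0_def a1_def)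
  have "d = dsum l L" using d_def by (simp add: dsum_def)
  then have dD: "d = D + a2 * (a1 + 1)" using LK by (simp only: dsum_Suc D_def a1_def a2_def)
  have iB: "alpha l (l (L - 1)) 1 (L - 1) = a1 * a0 + 1 + P"
    by (simp add: alpha_def LK a0_def a1_def P_def dsum_def)
  have iW: "alpha l 0 1 L = D + 1"
    by (simp add: alpha_def LK D_def dsum_def)
  have iL: "\<And>k. alpha l (l L) k L = a2 * a1 + k + D"
    by (simp add: alpha_def LK D_def a1_def a2_def dsum_def)
  have zero: "\<eta> j = 0" if "1 \<le> j" "j \<le> d" "j \<noteq> a1 * a0 + 1 + P" "j \<noteq> D + 1"
      "\<And>k. k \<in> {1..a2} \<Longrightarrow> j \<noteq> a2 * a1 + k + D" for j
    using e6 that iB iW iL a2 by (auto simp: a2_def)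
  have cK: "\<eta> (a1 * a0 + 1 + P) = c" using e1 iB by simp
  have wK: "\<eta> (D + 1) = w" using e2 iW by simp
  have w1: "wgt l (Suc K) \<eta> p j = 0" if p: "p \<in> {1..a1}" and j: "j \<in> {1..a0}" for p j
  proof -
    have "(p - 1) * a0 + j \<le> (p - 1) * a0 + a0" using j by simp
    also have "\<dots> = p * a0" using p by (cases p) auto
    also have "\<dots> \<le> a1 * a0" using p by simp
    finally have le: "(p - 1) * a0 + j \<le> a1 * a0" .
    have "\<eta> ((p - 1) * a0 + j + P) = 0"
      by (rule zero) (use le j DP dD a0 a1 a2 in auto)
    then show ?thesis by (simp add: wgt_def a0_def P_def)
  qed
  have r1: "realization l (Suc K) \<eta> x p = \<eta> (a1 * a0 + p + P)" if p: "p \<in> {1..a1}" for p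
  proof -
    have "realization l (Suc K) \<eta> x p = bias l (Suc K) \<eta> p"
      by (rule real_layer_bias) (use w1 p in \<open>auto simp: a0_def\<close>)
    then show ?thesis by (simp add: bias_def a0_def a1_def P_def)
  qed
  have r1': "max (realization l (Suc K) \<eta> x p) 0 = (if p = 1 then max c 0 else 0)" if p: "p \<in> {1..a1}" for p
  proof (cases "p = 1")
    case True then show ?thesis using r1[OF p] cK by simp
  next
    case False
    have "\<eta> (a1 * a0 + p + P) = 0"
      by (rule zero) (use p False DP dD a0 a1 a2 in auto)
    then show ?thesis using r1[OF p] False by simp
  qed
  have w2: "wgt l L \<eta> i j = (if i = 1 \<and> j = 1 then w else 0)" if j: "j \<in> {1..a1}" for j
  proof -
    have "(i - 1) * a1 + j \<le> (i - 1) * a1 + a1" using j by simp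
    also have "\<dots> = i * a1" using i by (cases i) auto
    also have "\<dots> \<le> a2 * a1" using i by (simp add: a2_def)
    finally have le: "(i - 1) * a1 + j \<le> a2 * a1" .
    have "wgt l L \<eta> i j = \<eta> ((i - 1) * a1 + j + D)" by (simp add: wgt_def LK a1_def D_def)
    moreover have "\<eta> ((i - 1) * a1 + j + D) = (if i = 1 \<and> j = 1 then w else 0)"
    proof (cases "i = 1 \<and> j = 1")
      case True then show ?thesis using wK by simp
    next
      case False
      have ne: "(i - 1) * a1 + j \<noteq> 1"
      proof
        assume h: "(i - 1) * a1 + j = 1"
        have "j = 1" using h j by auto
        then have "(i - 1) * a1 = 0" using h by simp
        then have "i = 1" using a1 i by auto
        then show False using False \<open>j = 1\<close> by simp
      qed
      have "\<eta> ((i - 1) * a1 + j + D) = 0"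
        by (rule zero) (use le j ne DP dD a0 a1 a2 in auto)
      then show ?thesis using False by auto
    qed
    ultimately show ?thesis by simp
  qed
  have bL: "bias l L \<eta> i = \<xi> i"
    using e3 i iL by (simp add: bias_def LK a1_def a2_def D_def)
  have "realization l L \<eta> x i = bias l L \<eta> i + (\<Sum>j=1..a1. wgt l L \<eta> i j * relu (realization l (Suc K) \<eta> x) j)"
    by (simp add: LK affine_def a1_def)
  also have "(\<Sum>j=1..a1. wgt l L \<eta> i j * relu (realization l (Suc K) \<eta> x) j)
      = (\<Sum>j=1..a1. if j = 1 then (if i = 1 then w * max c 0 else 0) else 0)"
    by (rule sum.cong) (auto simp: relu_def w2 r1')
  also have "\<dots> = (if i = 1 then w * max c 0 else 0)" using a1 by (simp add: sum.delta)
  finally show ?thesis using bL by simp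
qed

theorem proposition2p17:
  fixes L d :: nat and l :: "nat \<Rightarrow> nat" and a b :: real
    and \<mu> :: "(nat \<Rightarrow> real) measure" and f :: "(nat \<Rightarrow> real) \<Rightarrow> nat \<Rightarrow> real"
    and \<xi> \<theta> \<theta>' :: "nat \<Rightarrow> real"
  assumes l_pos: "\<forall>k. l k \<ge> 1"
    and L_gt: "L > 1"
    and d_def: "d = (\<Sum>k=1..L. l k * (l (k - 1) + 1))"
    and ab: "a < b"
    and sets_mu: "sets \<mu> = sets (restrict_space (Pi\<^sub>M {1..l 0} (\<lambda>_. borel)) ({1..l 0} \<rightarrow>\<^sub>E {a..b}))"
    and fin: "emeasure \<mu> (space \<mu>) < \<infinity>"
    and f_meas: "\<forall>i\<in>{1..l L}. (\<lambda>x. f x i) \<in> borel_measurable \<mu>"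
    and integr: "\<forall>\<eta>. integrable \<mu> (sqerr l L f \<eta>)"
    and h1: "\<theta> (alpha l (l (L - 1)) 1 (L - 1)) = 1"
    and h2: "\<theta>' (alpha l 0 1 L) = 1"
    and h3: "\<forall>i\<in>{1..l L}. \<theta> (alpha l (l L) i L) = \<xi> i \<and> \<theta>' (alpha l (l L) i L) = \<xi> i"
    and h4: "\<theta> (alpha l 0 1 L) = 0"
    and h5: "\<theta>' (alpha l (l (L - 1)) 1 (L - 1)) = 0"
    and h6: "\<forall>j\<in>{1..d} - (\<Union>k\<in>{1..l L}. {alpha l (l (L - 1)) 1 (L - 1), alpha l 0 1 L, alpha l (l L) k L}).
               \<theta> j = 0 \<and> \<theta>' j = 0"
  shows "loss l L \<mu> f \<theta> = loss l L \<mu> f \<theta>' \<and>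
         loss l L \<mu> f (\<lambda>j. (\<theta> j + \<theta>' j) / 2)
           = (loss l L \<mu> f \<theta> + loss l L \<mu> f \<theta>') / 2 + measure \<mu> (space \<mu>) / 16
             + (\<xi> 1 * measure \<mu> (space \<mu>) - (\<integral>x. f x 1 \<partial>\<mu>)) / 2"
proof -
  define K where "K = L - 2"
  have LK: "L = Suc (Suc K)" using L_gt by (simp add: K_def)
  define m where "m = (\<lambda>j. (\<theta> j + \<theta>' j) / 2)"
  have l1: "1 \<in> {1..l L}" using l_pos by simp
  have R1: "realization l L \<theta> x i = \<xi> i" if "i \<in> {1..l L}" for x i
  proof -
    have e3: "\<forall>i\<in>{1..l L}. \<theta> (alpha l (l L) i L) = \<xi> i" using h3 by blast
    have e6: "\<forall>j\<in>{1..d} - (\<Union>k\<in>{1..l L}. {alpha l (l (L - 1)) 1 (L - 1), alpha l 0 1 L, alpha l (l L) k L}). \<theta> j = 0" using h6 by blast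
    show ?thesis using general[OF l_pos LK d_def h1 h4 e3 e6 that, of x] by simp
  qed
  have R2: "realization l L \<theta>' x i = \<xi> i" if "i \<in> {1..l L}" for x i
  proof -
    have e3: "\<forall>i\<in>{1..l L}. \<theta>' (alpha l (l L) i L) = \<xi> i" using h3 by blast
    have e6: "\<forall>j\<in>{1..d} - (\<Union>k\<in>{1..l L}. {alpha l (l (L - 1)) 1 (L - 1), alpha l 0 1 L, alpha l (l L) k L}). \<theta>' j = 0" using h6 by blast
    show ?thesis using general[OF l_pos LK d_def h5 h2 e3 e6 that, of x] by simp
  qed
  have R3: "realization l L m x i = \<xi> i + (if i = 1 then 1/4 else 0)" if "i \<in> {1..l L}" for x i
  proof -
    have "realization l L m x i = \<xi> i + (if i = 1 then 1/2 * max (1/2) 0 else 0)"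
    proof (rule general[OF l_pos LK d_def _ _ _ _ that])
      show "m (alpha l (l (L - 1)) 1 (L - 1)) = 1/2" using h1 h5 by (simp add: m_def)
      show "m (alpha l 0 1 L) = 1/2" using h2 h4 by (simp add: m_def)
      show "\<forall>i\<in>{1..l L}. m (alpha l (l L) i L) = \<xi> i" using h3 by (simp add: m_def)
      show "\<forall>j\<in>{1..d} - (\<Union>k\<in>{1..l L}. {alpha l (l (L - 1)) 1 (L - 1), alpha l 0 1 L, alpha l (l L) k L}). m j = 0"
        using h6 unfolding m_def by (metis add_0 div_0)
    qed
    then show ?thesis by simp
  qed
  define S where "S = (\<lambda>x. \<Sum>i=1..l L. (\<xi> i - f x i)\<^sup>2)"
  have E1: "sqerr l L f \<theta> = S" unfolding S_def sqerr_def by (auto intro!: sum.cong simp: R1)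
  have E2: "sqerr l L f \<theta>' = S" unfolding S_def sqerr_def by (auto intro!: sum.cong simp: R2)
  define g where "g = (\<lambda>x. (\<xi> 1 - f x 1) / 2 + 1/16)"
  have E3: "sqerr l L f m x = S x + g x" for x
  proof -
    have "sqerr l L f m x = (\<Sum>i=1..l L. (\<xi> i - f x i)\<^sup>2 + (if i = 1 then g x else 0))"
      unfolding sqerr_def by (rule sum.cong) (auto simp: R3 g_def power2_eq_square field_simps)
    also have "\<dots> = S x + g x" using l1 by (simp add: sum.distrib S_def sum.delta)
    finally show ?thesis .
  qed
  interpret finite_measure \<mu> using fin by (intro finite_measureI) simp
  have iS: "integrable \<mu> S" using integr E1 by metis
  have iM: "integrable \<mu> (sqerr l L f m)" using integr by blast
  have ig: "integrable \<mu> g"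
  proof -
    have "integrable \<mu> (\<lambda>x. sqerr l L f m x - S x)" using iM iS by (rule Bochner_Integration.integrable_diff)
    then show ?thesis using E3 by simp
  qed
  have if1: "integrable \<mu> (\<lambda>x. f x 1)"
  proof -
    have "integrable \<mu> (\<lambda>x. 2 * (\<xi> 1 / 2 + 1/16 - g x))" using ig by auto
    moreover have "(\<lambda>x. 2 * (\<xi> 1 / 2 + 1/16 - g x)) = (\<lambda>x. f x 1)" by (auto simp: g_def field_simps)
    ultimately show ?thesis by simp
  qed
  have Ig: "(\<integral>x. g x \<partial>\<mu>) = (\<xi> 1 * measure \<mu> (space \<mu>) - (\<integral>x. f x 1 \<partial>\<mu>)) / 2 + measure \<mu> (space \<mu>) / 16"
  proof -
    have "(\<integral>x. g x \<partial>\<mu>) = (\<integral>x. (\<xi> 1 / 2 + 1/16) - f x 1 / 2 \<partial>\<mu>)" unfolding g_def by (rule Bochner_Integration.integral_cong) (auto simp: field_simps)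
    also have "\<dots> = (\<integral>x. (\<xi> 1 / 2 + 1/16) \<partial>\<mu>) - (\<integral>x. f x 1 / 2 \<partial>\<mu>)"
      using if1 by (intro Bochner_Integration.integral_diff) auto
    also have "\<dots> = measure \<mu> (space \<mu>) * (\<xi> 1 / 2 + 1/16) - (\<integral>x. f x 1 \<partial>\<mu>) / 2" by simp
    finally show ?thesis by (simp add: field_simps)
  qed
  have LM: "loss l L \<mu> f m = loss l L \<mu> f \<theta> + (\<integral>x. g x \<partial>\<mu>)"
  proof -
    have "loss l L \<mu> f m = (\<integral>x. S x + g x \<partial>\<mu>)" unfolding loss_def E3 by simp
    also have "\<dots> = (\<integral>x. S x \<partial>\<mu>) + (\<integral>x. g x \<partial>\<mu>)" using iS ig by (rule Bochner_Integration.integral_add)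
    finally show ?thesis unfolding loss_def E1 .
  qed
  have eq: "loss l L \<mu> f \<theta> = loss l L \<mu> f \<theta>'" unfolding loss_def E1 E2 ..
  show ?thesis using eq LM Ig unfolding m_def[symmetric] by (simp add: field_simps)
qed

end
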